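(* Let ${\overline V}$ be a smooth vector field on a spacetime domain $\Omega\subset\mathbb R^{1+3}$ with $\Box{\overline V}=0$ in $\Omega$. Then for every integer $k\geq0$, \[ \Box D_{\overline V}^k {\overline V}= G_k\qquad\text{in }\Omega, \] where $G_k$ is a linear combination of terms of the form \[ (\nabla D_{\overline V}^{k_1}{\overline V})\cdots(\nabla D_{\overline V}^{k_p}{\overline V})(\nabla^{(2)} D_{\overline V}^{k_{p+1}}{\overline V}),\qquad k_1+\dots+k_{p+1}\leq k-1 \] (in particular $G_0=0$).
   Context: $\mathbb R^{1+3}$ with coordinates $(x^0,\dots,x^3)$ and Minkowski metric $m=\mathrm{diag}(-1,1,1,1)$; indices raised/lowered with $m$, $\nabla_\mu=\partial/\partial x^\mu$, $\nabla^{(2)}$ the spacetime Hessian, $\Box=\nabla^\mu\nabla_\mu$, $D_{\overline V}={\overline V}^\mu\nabla_\mu$. Products are schematic, with indices contracted using $m$. *)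

theory Defs
  imports "HOL-Analysis.Analysis"
begin

text \<open>Spacetime R^{1+3} is modelled as real^4; the index type 4 has elements 0,1,2,3,
  with 0 the time coordinate.\<close>

type_synonym pt = "real ^ 4"

text \<open>Minkowski metric m = diag(-1,1,1,1) (diagonal entries; m is its own inverse).\<close>
definition mink :: "4 \<Rightarrow> real" where
  "mink i = (if i = 0 then -1 else 1)"

definition pd :: "4 \<Rightarrow> (pt \<Rightarrow> real) \<Rightarrow> pt \<Rightarrow> real" where
  "pd i f x = frechet_derivative f (at x) (axis i 1)"

fun iter_pd :: "4 list \<Rightarrow> (pt \<Rightarrow> real) \<Rightarrow> pt \<Rightarrow> real" where
  "iter_pd [] f = f"
| "iter_pd (i # is) f = pd i (iter_pd is f)"

definition smooth_on :: "pt set \<Rightarrow> (pt \<Rightarrow> real) \<Rightarrow> bool" where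
  "smooth_on \<Omega> f \<longleftrightarrow> (\<forall>is. \<forall>x\<in>\<Omega>. iter_pd is f differentiable (at x))"

definition comp :: "(pt \<Rightarrow> real ^ 4) \<Rightarrow> 4 \<Rightarrow> pt \<Rightarrow> real" where
  "comp V a = (\<lambda>x. V x $ a)"

definition smooth_vf :: "pt set \<Rightarrow> (pt \<Rightarrow> real ^ 4) \<Rightarrow> bool" where
  "smooth_vf \<Omega> V \<longleftrightarrow> (\<forall>a. smooth_on \<Omega> (comp V a))"

definition box :: "(pt \<Rightarrow> real) \<Rightarrow> pt \<Rightarrow> real" where
  "box f x = (\<Sum>i\<in>UNIV. mink i * pd i (pd i f) x)"

definition box_vf :: "(pt \<Rightarrow> real ^ 4) \<Rightarrow> pt \<Rightarrow> real ^ 4" where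
  "box_vf W x = (\<chi> a. box (comp W a) x)"

definition DV :: "(pt \<Rightarrow> real ^ 4) \<Rightarrow> (pt \<Rightarrow> real ^ 4) \<Rightarrow> pt \<Rightarrow> real ^ 4" where
  "DV V W x = (\<chi> a. \<Sum>mu\<in>UNIV. V x $ mu * pd mu (comp W a) x)"

fun DVpow :: "(pt \<Rightarrow> real ^ 4) \<Rightarrow> nat \<Rightarrow> pt \<Rightarrow> real ^ 4" where
  "DVpow V 0 = V"
| "DVpow V (Suc k) = DV V (DVpow V k)"

text \<open>A monomial (one term of the schematic linear combination):
  (c, firsts, (j, c1, d1, e)) stands for the product
    c * prod_{(ki, ai, bi) in firsts} nabla_{ai} (D_V^{ki} V)^{bi}
      * nabla_{c1} nabla_{d1} (D_V^{j} V)^{e},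
  i.e. a component of (nabla D^{k_1}V)...(nabla D^{k_p}V)(nabla^2 D^{k_{p+1}}V)
  with a constant coefficient (index contractions with m give constant coefficients).\<close>
type_synonym monomial = "real \<times> (nat \<times> 4 \<times> 4) list \<times> (nat \<times> 4 \<times> 4 \<times> 4)"

fun eval_mono :: "(pt \<Rightarrow> real ^ 4) \<Rightarrow> monomial \<Rightarrow> pt \<Rightarrow> real" where
  "eval_mono V (c, fs, (j, c1, d1, e)) x =
     c * (\<Prod>(ki, ai, bi)\<leftarrow>fs. pd ai (comp (DVpow V ki) bi) x)
       * pd c1 (pd d1 (comp (DVpow V j) e)) x"

text \<open>Admissibility: k_1 + ... + k_{p+1} \<le> k - 1 (as integers; so no term is admissible for k = 0).\<close>
fun admissible :: "nat \<Rightarrow> monomial \<Rightarrow> bool" where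
  "admissible k (c, fs, (j, c1, d1, e)) \<longleftrightarrow> (\<Sum>(ki, ai, bi)\<leftarrow>fs. ki) + j + 1 \<le> k"

end

theory Submission
  imports Defs
begin

lemma pd_add:
  assumes "f differentiable at x" "g differentiable at x"
  shows "pd i (\<lambda>y. f y + g y) x = pd i f x + pd i g x"
proof -
  have "((\<lambda>y. f y + g y) has_derivative (\<lambda>h. frechet_derivative f (at x) h + frechet_derivative g (at x) h)) (at x)"
    using assms by (intro has_derivative_add frechet_derivative_works[THEN iffD1])
  from frechet_derivative_at[OF this] show ?thesis unfolding pd_def by (simp add: fun_eq_iff)
qed

lemma pd_mult:
  assumes "f differentiable at x" "g differentiable at x"
  shows "pd i (\<lambda>y. f y * g y) x = f x * pd i g x + pd i f x * g x"
proof -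
  have "((\<lambda>y. f y * g y) has_derivative (\<lambda>h. f x * frechet_derivative g (at x) h + frechet_derivative f (at x) h * g x)) (at x)"
    using assms by (intro has_derivative_mult frechet_derivative_works[THEN iffD1])
  from frechet_derivative_at[OF this] show ?thesis unfolding pd_def by (simp add: fun_eq_iff)
qed

lemma pd_const[simp]: "pd i (\<lambda>y. c) x = 0"
  unfolding pd_def by simp

lemma pd_const_fun: "pd i (\<lambda>y. c) = (\<lambda>y. 0)"
  by (rule ext) simp

lemma pd_cmult:
  assumes "f differentiable at x"
  shows "pd i (\<lambda>y. c * f y) x = c * pd i f x"
  using pd_mult[of "\<lambda>y. c" x f i] assms by simp

lemma pd_sum:
  assumes "finite A" "\<And>a. a \<in> A \<Longrightarrow> f a differentiable at x"
  shows "pd i (\<lambda>y. \<Sum>a\<in>A. f a y) x = (\<Sum>a\<in>A. pd i (f a) x)"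
  using assms
proof (induction A rule: finite_induct)
  case empty
  then show ?case by simp
next
  case (insert a A)
  have d: "(\<lambda>y. \<Sum>a\<in>A. f a y) differentiable at x"
    using insert by (intro differentiable_sum) auto
  have "pd i (\<lambda>y. \<Sum>a\<in>insert a A. f a y) x = pd i (\<lambda>y. f a y + (\<Sum>a\<in>A. f a y)) x"
    using insert by simp
  also have "\<dots> = pd i (f a) x + pd i (\<lambda>y. \<Sum>a\<in>A. f a y) x"
    using insert d by (intro pd_add) auto
  finally show ?case using insert by simp
qed

lemma differentiable_sum_list:
  assumes "\<And>t. t \<in> set G \<Longrightarrow> F t differentiable at x"
  shows "(\<lambda>y. \<Sum>t\<leftarrow>G. F t y) differentiable at x"
  using assms by (induction G) (auto intro!: differentiable_add)

lemma pd_sum_list: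
  assumes "\<And>t. t \<in> set G \<Longrightarrow> F t differentiable at x"
  shows "pd i (\<lambda>y. \<Sum>t\<leftarrow>G. F t y) x = (\<Sum>t\<leftarrow>G. pd i (F t) x)"
  using assms
proof (induction G)
  case Nil
  then show ?case by simp
next
  case (Cons a G)
  have d: "(\<lambda>y. \<Sum>t\<leftarrow>G. F t y) differentiable at x"
    using Cons(2) by (intro differentiable_sum_list) auto
  show ?case using Cons d by (simp add: pd_add)
qed

lemma pd_local:
  assumes "open S" "x \<in> S" "\<And>y. y \<in> S \<Longrightarrow> f y = g y"
  shows "pd i f x = pd i g x"
proof (cases "f differentiable at x")
  case True
  then show ?thesis unfolding pd_def
    using frechet_derivative_transform_within_open[OF True assms] by simp
next
  case False
  have "\<not> g differentiable at x"
  proof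
    assume "g differentiable at x"
    then obtain g' where "(g has_derivative g') (at x)" by (auto simp: differentiable_def)
    then have "(f has_derivative g') (at x)"
      by (rule has_derivative_transform_within_open[OF _ assms(1,2)]) (simp add: assms(3))
    with False show False by (auto simp: differentiable_def)
  qed
  then show ?thesis using False unfolding pd_def frechet_derivative_def differentiable_def
    by simp
qed

lemma differentiable_local:
  assumes "open S" "x \<in> S" "\<And>y. y \<in> S \<Longrightarrow> f y = g y" "g differentiable at x"
  shows "f differentiable at x"
proof -
  obtain g' where "(g has_derivative g') (at x)" using assms(4) by (auto simp: differentiable_def)
  then have "(f has_derivative g') (at x)"
    by (rule has_derivative_transform_within_open[OF _ assms(1,2)]) (simp add: assms(3))
  then show ?thesis by (auto simp: differentiable_def)
qed


lemma line_deriv: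
  fixes f :: "pt \<Rightarrow> real"
  assumes "f differentiable at (p + s *\<^sub>R u)"
  shows "((\<lambda>t. f (p + t *\<^sub>R u)) has_derivative (\<lambda>d. d * frechet_derivative f (at (p + s *\<^sub>R u)) u)) (at s within T)"
proof -
  have l: "linear (frechet_derivative f (at (p + s *\<^sub>R u)))"
    using assms by (rule linear_frechet_derivative)
  have a: "((\<lambda>t. p + t *\<^sub>R u) has_derivative (\<lambda>d. d *\<^sub>R u)) (at s within T)"
    by (auto intro!: derivative_eq_intros)
  have "((\<lambda>t. f (p + t *\<^sub>R u)) has_derivative (\<lambda>d. frechet_derivative f (at (p + s *\<^sub>R u)) (d *\<^sub>R u))) (at s within T)"
    using has_derivative_compose[OF a, of f] assms frechet_derivative_works by blast
  moreover have "(\<lambda>d. frechet_derivative f (at (p + s *\<^sub>R u)) (d *\<^sub>R u)) = (\<lambda>d. d * frechet_derivative f (at (p + s *\<^sub>R u)) u)"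
    using linear_scale[OF l] by auto
  ultimately show ?thesis by simp
qed

lemma mvt2:
  fixes f :: "pt \<Rightarrow> real"
  assumes h: "0 < h"
    and inS: "\<And>s t. 0 \<le> s \<Longrightarrow> s \<le> h \<Longrightarrow> 0 \<le> t \<Longrightarrow> t \<le> h \<Longrightarrow> x + s *\<^sub>R u + t *\<^sub>R v \<in> S"
    and d1: "\<And>y. y \<in> S \<Longrightarrow> f differentiable at y"
    and d2: "\<And>y. y \<in> S \<Longrightarrow> (\<lambda>y. frechet_derivative f (at y) u) differentiable at y"
  shows "\<exists>s t. 0 \<le> s \<and> s \<le> h \<and> 0 \<le> t \<and> t \<le> h \<and>
     f (x + h *\<^sub>R u + h *\<^sub>R v) - f (x + h *\<^sub>R u) - f (x + h *\<^sub>R v) + f x =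
     h^2 * frechet_derivative (\<lambda>y. frechet_derivative f (at y) u) (at (x + s *\<^sub>R u + t *\<^sub>R v)) v"
proof -
  define Du where "Du = (\<lambda>y. frechet_derivative f (at y) u)"
  define g where "g s = f (x + h *\<^sub>R v + s *\<^sub>R u) - f (x + s *\<^sub>R u)" for s
  have "(g has_derivative (\<lambda>d. d * (Du (x + h *\<^sub>R v + s *\<^sub>R u) - Du (x + s *\<^sub>R u)))) (at s within {0..h})"
    if "0 \<le> s" "s \<le> h" for s
  proof -
    have m1: "x + h *\<^sub>R v + s *\<^sub>R u \<in> S" using inS[of s h] that h by (simp add: add_ac)
    have m2: "x + s *\<^sub>R u \<in> S" using inS[of s 0] that h by simp
    have "(g has_derivative (\<lambda>d. d * Du (x + h *\<^sub>R v + s *\<^sub>R u) - d * Du (x + s *\<^sub>R u))) (at s within {0..h})"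
      unfolding g_def Du_def
      by (intro has_derivative_diff line_deriv d1 m1 m2)
    then show ?thesis by (simp add: algebra_simps)
  qed
  from mvt_simple[OF h this] obtain \<xi> where \<xi>: "0 < \<xi>" "\<xi> < h"
    and e1: "g h - g 0 = (h - 0) * (Du (x + h *\<^sub>R v + \<xi> *\<^sub>R u) - Du (x + \<xi> *\<^sub>R u))"
    by auto
  define \<phi> where "\<phi> t = Du (x + \<xi> *\<^sub>R u + t *\<^sub>R v)" for t
  have "(\<phi> has_derivative (\<lambda>d. d * frechet_derivative Du (at (x + \<xi> *\<^sub>R u + t *\<^sub>R v)) v)) (at t within {0..h})"
    if "0 \<le> t" "t \<le> h" for t
    unfolding \<phi>_def using d2[OF inS[of \<xi> t]] that \<xi>
    by (intro line_deriv) (auto simp: Du_def)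
  from mvt_simple[OF h this] obtain \<eta> where \<eta>: "0 < \<eta>" "\<eta> < h"
    and e2: "\<phi> h - \<phi> 0 = (h - 0) * frechet_derivative Du (at (x + \<xi> *\<^sub>R u + \<eta> *\<^sub>R v)) v"
    by auto
  have "Du (x + h *\<^sub>R v + \<xi> *\<^sub>R u) - Du (x + \<xi> *\<^sub>R u) = \<phi> h - \<phi> 0"
    unfolding \<phi>_def by (simp add: add_ac)
  then have "g h - g 0 = h^2 * frechet_derivative Du (at (x + \<xi> *\<^sub>R u + \<eta> *\<^sub>R v)) v"
    using e1 e2 by (simp add: power2_eq_square)
  moreover have "g h - g 0 = f (x + h *\<^sub>R u + h *\<^sub>R v) - f (x + h *\<^sub>R u) - f (x + h *\<^sub>R v) + f x"
    unfolding g_def by (simp add: add_ac)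
  ultimately show ?thesis using \<xi> \<eta> unfolding Du_def
    by (intro exI[of _ \<xi>] exI[of _ \<eta>]) auto
qed

lemma schwarz:
  fixes f :: "pt \<Rightarrow> real"
  assumes S: "open S" "x \<in> S"
    and d0: "\<And>y. y \<in> S \<Longrightarrow> f differentiable at y"
    and di: "\<And>y. y \<in> S \<Longrightarrow> pd i f differentiable at y"
    and dj: "\<And>y. y \<in> S \<Longrightarrow> pd j f differentiable at y"
    and cA: "isCont (pd j (pd i f)) x"
    and cB: "isCont (pd i (pd j f)) x"
  shows "pd j (pd i f) x = pd i (pd j f) x"
proof (rule ccontr)
  assume ne: "pd j (pd i f) x \<noteq> pd i (pd j f) x"
  define d where "d = \<bar>pd j (pd i f) x - pd i (pd j f) x\<bar>"
  have d: "d > 0" using ne by (simp add: d_def)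
  obtain \<delta>1 where \<delta>1: "\<delta>1 > 0" "\<And>y. dist y x < \<delta>1 \<Longrightarrow> dist (pd j (pd i f) y) (pd j (pd i f) x) < d/2"
    using cA[unfolded continuous_at_eps_delta, rule_format, of "d/2"] d by auto
  obtain \<delta>2 where \<delta>2: "\<delta>2 > 0" "\<And>y. dist y x < \<delta>2 \<Longrightarrow> dist (pd i (pd j f) y) (pd i (pd j f) x) < d/2"
    using cB[unfolded continuous_at_eps_delta, rule_format, of "d/2"] d by auto
  obtain e where e: "e > 0" "ball x e \<subseteq> S" using S open_contains_ball by blast
  define r where "r = min e (min \<delta>1 \<delta>2)"
  have r: "r > 0" using e \<delta>1 \<delta>2 by (simp add: r_def)
  define h where "h = r / 3"
  have h: "h > 0" using r by (simp add: h_def)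
  have near: "dist (x + s *\<^sub>R u + t *\<^sub>R v) x < r"
    if "0 \<le> s" "s \<le> h" "0 \<le> t" "t \<le> h" "norm u = 1" "norm v = 1" for s t and u v :: pt
  proof -
    have "dist (x + s *\<^sub>R u + t *\<^sub>R v) x = norm (s *\<^sub>R u + t *\<^sub>R v)"
      by (simp add: dist_norm)
    also have "\<dots> \<le> norm (s *\<^sub>R u) + norm (t *\<^sub>R v)" by (rule norm_triangle_ineq)
    also have "\<dots> = s + t" using that by simp
    also have "\<dots> < r" using that r by (simp add: h_def)
    finally show ?thesis .
  qed
  have inS: "x + s *\<^sub>R u + t *\<^sub>R v \<in> S"
    if "0 \<le> s" "s \<le> h" "0 \<le> t" "t \<le> h" "norm u = 1" "norm v = 1" for s t and u v :: pt
    using near[OF that] e unfolding r_def by (auto simp: dist_commute)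
  have nu: "norm (axis i (1::real) :: pt) = 1" "norm (axis j (1::real) :: pt) = 1"
    by simp_all
  have pdi: "pd i f = (\<lambda>y. frechet_derivative f (at y) (axis i 1))" by (rule ext) (simp add: pd_def)
  have pdj: "pd j f = (\<lambda>y. frechet_derivative f (at y) (axis j 1))" by (rule ext) (simp add: pd_def)
  obtain s t where st: "0 \<le> s" "s \<le> h" "0 \<le> t" "t \<le> h" and
    E1: "f (x + h *\<^sub>R axis i 1 + h *\<^sub>R axis j 1) - f (x + h *\<^sub>R axis i 1) - f (x + h *\<^sub>R axis j 1) + f x =
     h^2 * pd j (pd i f) (x + s *\<^sub>R axis i 1 + t *\<^sub>R axis j 1)"
    using mvt2[OF h, of x "axis i 1" "axis j 1" S f] inS nu d0 di
    unfolding pdi by (auto simp: pd_def)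
  obtain s' t' where st': "0 \<le> s'" "s' \<le> h" "0 \<le> t'" "t' \<le> h" and
    E2: "f (x + h *\<^sub>R axis j 1 + h *\<^sub>R axis i 1) - f (x + h *\<^sub>R axis j 1) - f (x + h *\<^sub>R axis i 1) + f x =
     h^2 * pd i (pd j f) (x + s' *\<^sub>R axis j 1 + t' *\<^sub>R axis i 1)"
    using mvt2[OF h, of x "axis j 1" "axis i 1" S f] inS nu d0 dj
    unfolding pdj by (auto simp: pd_def)
  have "h^2 * pd j (pd i f) (x + s *\<^sub>R axis i 1 + t *\<^sub>R axis j 1) = h^2 * pd i (pd j f) (x + s' *\<^sub>R axis j 1 + t' *\<^sub>R axis i 1)"
  proof -
    have eqp: "x + h *\<^sub>R axis j 1 + h *\<^sub>R axis i 1 = x + h *\<^sub>R axis i 1 + h *\<^sub>R axis j (1::real)"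
      by (simp add: algebra_simps)
    show ?thesis using E1 E2 unfolding eqp by linarith
  qed
  then have eq: "pd j (pd i f) (x + s *\<^sub>R axis i 1 + t *\<^sub>R axis j 1) = pd i (pd j f) (x + s' *\<^sub>R axis j 1 + t' *\<^sub>R axis i 1)"
    using h by simp
  have "dist (pd j (pd i f) (x + s *\<^sub>R axis i 1 + t *\<^sub>R axis j 1)) (pd j (pd i f) x) < d/2"
    using \<delta>1(2) near[OF st nu] unfolding r_def by simp
  moreover have "dist (pd i (pd j f) (x + s' *\<^sub>R axis j 1 + t' *\<^sub>R axis i 1)) (pd i (pd j f) x) < d/2"
    using \<delta>2(2) near[OF st' nu(2,1)] unfolding r_def by simp
  ultimately show False using eq unfolding d_def dist_real_def by argo
qed


lemma iter_pd_snoc: "iter_pd (is @ [i]) f = iter_pd is (pd i f)"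
  by (induction "is") auto

lemma smooth_pd:
  assumes "smooth_on S f" shows "smooth_on S (pd i f)"
  unfolding smooth_on_def
proof (intro allI ballI)
  fix "is" x assume x: "x \<in> S"
  have "\<forall>x\<in>S. iter_pd (is @ [i]) f differentiable at x"
    using assms unfolding smooth_on_def by blast
  then show "iter_pd is (pd i f) differentiable at x"
    using x by (simp add: iter_pd_snoc)
qed

lemma smooth_diff: "smooth_on S f \<Longrightarrow> x \<in> S \<Longrightarrow> f differentiable at x"
  unfolding smooth_on_def by (drule spec[of _ "[]"]) simp

lemma smooth_cont: "smooth_on S f \<Longrightarrow> x \<in> S \<Longrightarrow> isCont f x"
  by (rule differentiable_imp_continuous_within, rule smooth_diff)

definition SP :: "((pt \<Rightarrow> real) \<times> (pt \<Rightarrow> real)) list \<Rightarrow> pt \<Rightarrow> real" where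
  "SP L = (\<lambda>z. \<Sum>(u,v)\<leftarrow>L. u z * v z)"

lemma SP_Nil: "SP [] = (\<lambda>z. 0)" by (simp add: SP_def)
lemma SP_Cons: "SP (p # L) = (\<lambda>z. fst p z * snd p z + SP L z)"
  by (cases p) (simp add: SP_def)

lemma SP_diff: "(\<And>u v. (u,v) \<in> set L \<Longrightarrow> u differentiable at x \<and> v differentiable at x) \<Longrightarrow> SP L differentiable at x"
proof (induction L)
  case Nil then show ?case by (simp add: SP_Nil)
next
  case (Cons p L)
  then show ?case unfolding SP_Cons
    by (cases p) (auto intro!: differentiable_add differentiable_mult)
qed

definition dSP :: "4 \<Rightarrow> ((pt \<Rightarrow> real) \<times> (pt \<Rightarrow> real)) list \<Rightarrow> ((pt \<Rightarrow> real) \<times> (pt \<Rightarrow> real)) list" where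
  "dSP i L = concat (map (\<lambda>(u,v). [(u, pd i v), (pd i u, v)]) L)"

lemma pd_SP: "(\<And>u v. (u,v) \<in> set L \<Longrightarrow> u differentiable at x \<and> v differentiable at x) \<Longrightarrow> pd i (SP L) x = SP (dSP i L) x"
proof (induction L)
  case Nil then show ?case by (simp add: SP_Nil dSP_def)
next
  case (Cons p L)
  obtain u v where p: "p = (u,v)" by (cases p)
  have d: "SP L differentiable at x" using Cons by (intro SP_diff) auto
  have "pd i (SP (p # L)) x = pd i (\<lambda>z. u z * v z) x + pd i (SP L) x"
    unfolding SP_Cons p using Cons d p
    by (subst pd_add) (auto intro!: differentiable_mult)
  also have "\<dots> = u x * pd i v x + pd i u x * v x + SP (dSP i L) x"
    using Cons p by (subst pd_mult) auto
  finally show ?case by (simp add: dSP_def SP_def p)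
qed

lemma iter_pd_local:
  assumes "open S" "\<And>y. y \<in> S \<Longrightarrow> f y = g y" "y \<in> S"
  shows "iter_pd is f y = iter_pd is g y"
  using assms(3)
proof (induction "is" arbitrary: y)
  case Nil then show ?case using assms by simp
next
  case (Cons i "is")
  have "pd i (iter_pd is f) y = pd i (iter_pd is g) y"
    by (rule pd_local[OF assms(1) Cons.prems]) (rule Cons.IH)
  then show ?case by simp
qed

lemma smooth_local:
  assumes "open S" "\<And>y. y \<in> S \<Longrightarrow> f y = g y" "smooth_on S g"
  shows "smooth_on S f"
  unfolding smooth_on_def
proof (intro allI ballI)
  fix "is" x assume x: "x \<in> S"
  have e: "\<And>y. y \<in> S \<Longrightarrow> iter_pd is f y = iter_pd is g y"
    by (rule iter_pd_local[OF assms(1)]) (use assms(2) in auto)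
  show "iter_pd is f differentiable at x"
    by (rule differentiable_local[OF assms(1) x e]) (use assms(3) x in \<open>auto simp: smooth_on_def\<close>)
qed

lemma smooth_list_diff:
  "\<forall>u v. (u,v) \<in> set L \<longrightarrow> smooth_on S u \<and> smooth_on S v \<Longrightarrow> x \<in> S \<Longrightarrow> (u,v) \<in> set L \<Longrightarrow> u differentiable at x \<and> v differentiable at x"
  by (meson smooth_diff)

lemma SP_smooth:
  assumes "open S" "\<And>u v. (u,v) \<in> set L \<Longrightarrow> smooth_on S u \<and> smooth_on S v"
  shows "smooth_on S (SP L)"
proof -
  have main: "\<forall>L. (\<forall>u v. (u,v) \<in> set L \<longrightarrow> smooth_on S u \<and> smooth_on S v) \<longrightarrow>
     (\<exists>L'. (\<forall>u v. (u,v) \<in> set L' \<longrightarrow> smooth_on S u \<and> smooth_on S v) \<and> (\<forall>y\<in>S. iter_pd is (SP L) y = SP L' y))" for "is"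
  proof (induction "is")
    case Nil then show ?case by auto
  next
    case (Cons i "is")
    show ?case
    proof (intro allI impI)
      fix L assume L: "\<forall>u v. (u,v) \<in> set L \<longrightarrow> smooth_on S u \<and> smooth_on S v"
      then obtain L' where L': "\<forall>u v. (u,v) \<in> set L' \<longrightarrow> smooth_on S u \<and> smooth_on S v"
        "\<forall>y\<in>S. iter_pd is (SP L) y = SP L' y" using Cons by blast
      have sm: "\<forall>u v. (u,v) \<in> set (dSP i L') \<longrightarrow> smooth_on S u \<and> smooth_on S v"
      proof (intro allI impI)
        fix u v assume "(u,v) \<in> set (dSP i L')"
        then obtain a b where ab: "(a,b) \<in> set L'" and uv: "(u = a \<and> v = pd i b) \<or> (u = pd i a \<and> v = b)"
          unfolding dSP_def by auto
        have sa: "smooth_on S a" and sb: "smooth_on S b" using L'(1) ab by blast+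
        show "smooth_on S u \<and> smooth_on S v"
          using uv
        proof
          assume "u = a \<and> v = pd i b" then show ?thesis using sa smooth_pd[OF sb] by simp
        next
          assume "u = pd i a \<and> v = b" then show ?thesis using sb smooth_pd[OF sa] by simp
        qed
      qed
      have "\<forall>y\<in>S. iter_pd (i # is) (SP L) y = SP (dSP i L') y"
      proof
        fix y assume y: "y \<in> S"
        have "iter_pd (i # is) (SP L) y = pd i (SP L') y"
          using pd_local[OF assms(1) y, of "iter_pd is (SP L)" "SP L'"] L'(2) by simp
        also have "\<dots> = SP (dSP i L') y"
          by (rule pd_SP, rule smooth_list_diff[OF L'(1) y])
        finally show "iter_pd (i # is) (SP L) y = SP (dSP i L') y" .
      qed
      then show "\<exists>L'. (\<forall>u v. (u,v) \<in> set L' \<longrightarrow> smooth_on S u \<and> smooth_on S v) \<and> (\<forall>y\<in>S. iter_pd (i # is) (SP L) y = SP L' y)"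
        using sm by blast
    qed
  qed
  show ?thesis unfolding smooth_on_def
  proof (intro allI ballI)
    fix "is" x assume x: "x \<in> S"
    from main[of "is"] obtain L' where L': "\<forall>u v. (u,v) \<in> set L' \<longrightarrow> smooth_on S u \<and> smooth_on S v"
        "\<forall>y\<in>S. iter_pd is (SP L) y = SP L' y" using assms(2) by blast
    show "iter_pd is (SP L) differentiable at x"
    proof -
      have dd: "SP L' differentiable at x"
        by (rule SP_diff, rule smooth_list_diff[OF L'(1) x])
      show ?thesis by (rule differentiable_local[OF assms(1) x _ dd]) (use L'(2) in auto)
    qed
  qed
qed

lemma smooth_const: "smooth_on S (\<lambda>y. c)"
proof -
  have "iter_pd is (\<lambda>y. c) = (\<lambda>y. if is = [] then c else 0)" for "is"
    by (induction "is") (auto simp: pd_const_fun)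
  then show ?thesis unfolding smooth_on_def by simp
qed

lemma smooth_mult:
  assumes "open S" "smooth_on S f" "smooth_on S g"
  shows "smooth_on S (\<lambda>y. f y * g y)"
proof -
  have "smooth_on S (SP [(f,g)])" by (rule SP_smooth) (use assms in auto)
  then show ?thesis by (simp add: SP_def)
qed

lemma smooth_add:
  assumes "open S" "smooth_on S f" "smooth_on S g"
  shows "smooth_on S (\<lambda>y. f y + g y)"
proof -
  have "smooth_on S (SP [(f,\<lambda>_. 1),(g, \<lambda>_. 1)])" by (rule SP_smooth) (use assms in \<open>auto simp: smooth_const\<close>)
  then show ?thesis by (simp add: SP_def)
qed

lemma smooth_sum:
  assumes "open S" "finite A" "\<And>a. a \<in> A \<Longrightarrow> smooth_on S (f a)"
  shows "smooth_on S (\<lambda>y. \<Sum>a\<in>A. f a y)"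
  using assms(2,3)
proof (induction A rule: finite_induct)
  case empty then show ?case by (simp add: smooth_const)
next
  case (insert a A) then show ?case by (simp add: smooth_add[OF assms(1)])
qed

lemma smooth_prod_list:
  assumes "open S" "\<And>t. t \<in> set G \<Longrightarrow> smooth_on S (F t)"
  shows "smooth_on S (\<lambda>y. \<Prod>t\<leftarrow>G. F t y)"
  using assms(2)
proof (induction G)
  case Nil then show ?case by (simp add: smooth_const)
next
  case (Cons a G) then show ?case by (simp add: smooth_mult[OF assms(1)])
qed

lemma smooth_schwarz:
  assumes "open S" "smooth_on S f" "x \<in> S"
  shows "pd j (pd i f) x = pd i (pd j f) x"
proof (rule schwarz[OF assms(1,3)])
  fix y assume y: "y \<in> S"
  show "f differentiable at y" by (rule smooth_diff[OF assms(2) y])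
  show "pd i f differentiable at y" by (rule smooth_diff[OF smooth_pd[OF assms(2)] y])
  show "pd j f differentiable at y" by (rule smooth_diff[OF smooth_pd[OF assms(2)] y])
next
  show "isCont (pd j (pd i f)) x" by (rule smooth_cont[OF smooth_pd[OF smooth_pd[OF assms(2)]] assms(3)])
  show "isCont (pd i (pd j f)) x" by (rule smooth_cont[OF smooth_pd[OF smooth_pd[OF assms(2)]] assms(3)])
qed


fun wt :: "monomial \<Rightarrow> nat" where
  "wt (c, fs, (j, c1, d1, e)) = (\<Sum>(ki, ai, bi)\<leftarrow>fs. ki) + j"

lemma adm_wt: "admissible k t \<longleftrightarrow> wt t + 1 \<le> k"
  by (cases t rule: prod_cases6) simp

definition pf :: "nat \<times> 4 \<times> 4 \<Rightarrow> monomial \<Rightarrow> monomial" where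
  "pf f t = (case t of (c, fs, s) \<Rightarrow> (c, f # fs, s))"

definition sc :: "real \<Rightarrow> monomial \<Rightarrow> monomial" where
  "sc a t = (case t of (c, r) \<Rightarrow> (a * c, r))"

lemma eval_pf: "eval_mono V (pf (ki, ai, bi) t) y = pd ai (comp (DVpow V ki) bi) y * eval_mono V t y"
  by (cases t rule: prod_cases6) (simp add: pf_def)

lemma wt_pf: "wt (pf (ki, ai, bi) t) = ki + wt t"
  by (cases t rule: prod_cases6) (simp add: pf_def)

lemma eval_sc: "eval_mono V (sc a t) y = a * eval_mono V t y"
  by (cases t rule: prod_cases6) (simp add: sc_def)

lemma wt_sc: "wt (sc a t) = wt t"
  by (cases t rule: prod_cases6) (simp add: sc_def)

lemma sum_list_swap: "(\<Sum>mu\<in>A. \<Sum>t\<leftarrow>G. f mu t) = (\<Sum>t\<leftarrow>G. \<Sum>mu\<in>A. f mu t)"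
  by (induction G) (simp_all add: sum.distrib)

lemma sum_list_mult_left: "(\<Sum>t\<leftarrow>G. a * f t) = a * (\<Sum>t\<leftarrow>G. f t :: real)"
  by (induction G) (simp_all add: algebra_simps)

lemma pd_eta: "pd i (\<lambda>x. f x) = pd i f" by simp

context
  fixes \<Omega> :: "pt set" and V :: "pt \<Rightarrow> real ^ 4"
  assumes o\<Omega>: "open \<Omega>" and sV: "smooth_vf \<Omega> V" and bV: "\<forall>x\<in>\<Omega>. box_vf V x = 0"
begin

lemma smooth_v: "smooth_on \<Omega> (comp V a)"
  using sV by (simp add: smooth_vf_def)

lemma comp_DV: "comp (DV V W) a = (\<lambda>x. \<Sum>mu\<in>UNIV. comp V mu x * pd mu (comp W a) x)"
  by (rule ext) (simp add: DV_def comp_def)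

lemma w_Suc: "comp (DVpow V (Suc k)) b = (\<lambda>x. \<Sum>mu\<in>UNIV. comp V mu x * pd mu (comp (DVpow V k) b) x)"
  by (simp add: comp_DV)

lemma smooth_w: "smooth_on \<Omega> (comp (DVpow V k) b)"
proof (induction k arbitrary: b)
  case 0 then show ?case using smooth_v by simp
next
  case (Suc k)
  show ?case unfolding w_Suc
    by (intro smooth_sum o\<Omega> smooth_mult smooth_pd smooth_v Suc) auto
qed

lemma sd: "smooth_on \<Omega> f \<Longrightarrow> y \<in> \<Omega> \<Longrightarrow> f differentiable at y"
  by (rule smooth_diff)

lemmas sm = smooth_w smooth_v smooth_pd

lemma dV: "y \<in> \<Omega> \<Longrightarrow> comp V mu differentiable at y"
  by (rule sd[OF smooth_v])
lemma dpV: "y \<in> \<Omega> \<Longrightarrow> pd i (comp V mu) differentiable at y"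
  by (rule sd[OF smooth_pd[OF smooth_v]])
lemma dppV: "y \<in> \<Omega> \<Longrightarrow> pd i (pd j (comp V mu)) differentiable at y"
  by (rule sd[OF smooth_pd[OF smooth_pd[OF smooth_v]]])
lemma dW: "y \<in> \<Omega> \<Longrightarrow> comp (DVpow V k) b differentiable at y"
  by (rule sd[OF smooth_w])
lemma dpW: "y \<in> \<Omega> \<Longrightarrow> pd i (comp (DVpow V k) b) differentiable at y"
  by (rule sd[OF smooth_pd[OF smooth_w]])
lemma dppW: "y \<in> \<Omega> \<Longrightarrow> pd i (pd j (comp (DVpow V k) b)) differentiable at y"
  by (rule sd[OF smooth_pd[OF smooth_pd[OF smooth_w]]])

lemmas dd = dV dpV dppV dW dpW dppW

definition DVs :: "(pt \<Rightarrow> real) \<Rightarrow> pt \<Rightarrow> real" where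
  "DVs h y = (\<Sum>mu\<in>UNIV. comp V mu y * pd mu h y)"

lemma pd3:
  assumes "smooth_on \<Omega> f" "y \<in> \<Omega>"
  shows "pd c (pd d (pd mu f)) y = pd mu (pd c (pd d f)) y"
proof -
  have "pd c (pd d (pd mu f)) y = pd c (pd mu (pd d f)) y"
    using assms by (intro pd_local[OF o\<Omega>]) (auto intro!: smooth_schwarz[OF o\<Omega>])
  also have "\<dots> = pd mu (pd c (pd d f)) y"
    using assms by (intro smooth_schwarz[OF o\<Omega>]) (auto intro: smooth_pd)
  finally show ?thesis .
qed

lemma pd_w_Suc:
  assumes "z \<in> \<Omega>"
  shows "pd a (comp (DVpow V (Suc k)) b) z =
    (\<Sum>mu\<in>UNIV. comp V mu z * pd a (pd mu (comp (DVpow V k) b)) z + pd a (comp V mu) z * pd mu (comp (DVpow V k) b) z)"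
proof -
  have "pd a (comp (DVpow V (Suc k)) b) z = (\<Sum>mu\<in>UNIV. pd a (\<lambda>x. comp V mu x * pd mu (comp (DVpow V k) b) x) z)"
    unfolding w_Suc using assms
    by (intro pd_sum) (auto intro!: differentiable_mult dd)
  also have "\<dots> = (\<Sum>mu\<in>UNIV. comp V mu z * pd a (pd mu (comp (DVpow V k) b)) z + pd a (comp V mu) z * pd mu (comp (DVpow V k) b) z)"
    using assms by (intro sum.cong refl pd_mult) (auto intro!: dd)
  finally show ?thesis .
qed

lemma FD1:
  assumes "y \<in> \<Omega>"
  shows "DVs (pd a (comp (DVpow V k) b)) y = pd a (comp (DVpow V (Suc k)) b) y -
     (\<Sum>mu\<in>UNIV. pd a (comp V mu) y * pd mu (comp (DVpow V k) b) y)"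
proof -
  have "pd a (pd mu (comp (DVpow V k) b)) y = pd mu (pd a (comp (DVpow V k) b)) y" for mu
    using assms by (intro smooth_schwarz[OF o\<Omega>] sm)
  then show ?thesis unfolding pd_w_Suc[OF assms] DVs_def
    by (simp add: sum.distrib)
qed

lemma FD2:
  assumes "y \<in> \<Omega>"
  shows "DVs (pd c (pd d (comp (DVpow V k) b))) y = pd c (pd d (comp (DVpow V (Suc k)) b)) y -
     (\<Sum>mu\<in>UNIV. pd c (pd d (comp V mu)) y * pd mu (comp (DVpow V k) b) y
        + pd d (comp V mu) y * pd c (pd mu (comp (DVpow V k) b)) y
        + pd c (comp V mu) y * pd d (pd mu (comp (DVpow V k) b)) y)"
proof -
  let ?w = "comp (DVpow V k) b"
  have "pd c (pd d (comp (DVpow V (Suc k)) b)) y =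
     pd c (\<lambda>z. \<Sum>mu\<in>UNIV. comp V mu z * pd d (pd mu ?w) z + pd d (comp V mu) z * pd mu ?w z) y"
    using assms by (intro pd_local[OF o\<Omega>] pd_w_Suc) auto
  also have "\<dots> = (\<Sum>mu\<in>UNIV. pd c (\<lambda>z. comp V mu z * pd d (pd mu ?w) z + pd d (comp V mu) z * pd mu ?w z) y)"
    using assms by (intro pd_sum) (auto intro!: differentiable_mult differentiable_add dd)
  also have "\<dots> = (\<Sum>mu\<in>UNIV. comp V mu y * pd c (pd d (pd mu ?w)) y + pd c (comp V mu) y * pd d (pd mu ?w) y
       + (pd d (comp V mu) y * pd c (pd mu ?w) y + pd c (pd d (comp V mu)) y * pd mu ?w y))"
    using assms
  proof (intro sum.cong refl)
    fix mu :: 4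
    have "pd c (\<lambda>z. comp V mu z * pd d (pd mu ?w) z + pd d (comp V mu) z * pd mu ?w z) y =
       pd c (\<lambda>z. comp V mu z * pd d (pd mu ?w) z) y + pd c (\<lambda>z. pd d (comp V mu) z * pd mu ?w z) y"
      using assms by (intro pd_add differentiable_mult dd)
    also have "\<dots> = comp V mu y * pd c (pd d (pd mu ?w)) y + pd c (comp V mu) y * pd d (pd mu ?w) y
       + (pd d (comp V mu) y * pd c (pd mu ?w) y + pd c (pd d (comp V mu)) y * pd mu ?w y)"
      using assms by (simp add: pd_mult dd)
    finally show "pd c (\<lambda>z. comp V mu z * pd d (pd mu ?w) z + pd d (comp V mu) z * pd mu ?w z) y =
       comp V mu y * pd c (pd d (pd mu ?w)) y + pd c (comp V mu) y * pd d (pd mu ?w) y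
       + (pd d (comp V mu) y * pd c (pd mu ?w) y + pd c (pd d (comp V mu)) y * pd mu ?w y)" .
  qed
  also have "\<dots> = (\<Sum>mu\<in>UNIV. comp V mu y * pd mu (pd c (pd d ?w)) y + pd c (comp V mu) y * pd d (pd mu ?w) y
       + (pd d (comp V mu) y * pd c (pd mu ?w) y + pd c (pd d (comp V mu)) y * pd mu ?w y))"
    using assms by (intro sum.cong refl) (simp add: pd3 smooth_w)
  finally show ?thesis unfolding DVs_def by (simp add: sum.distrib algebra_simps)
qed


lemma sd': "smooth_on \<Omega> f \<Longrightarrow> y \<in> \<Omega> \<Longrightarrow> pd i f differentiable at y"
  by (intro sd smooth_pd)

lemma sd'': "smooth_on \<Omega> f \<Longrightarrow> y \<in> \<Omega> \<Longrightarrow> pd i (pd j f) differentiable at y"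
  by (intro sd smooth_pd)

lemma box_eq: "box f = (\<lambda>x. \<Sum>i\<in>UNIV. mink i * pd i (pd i f) x)"
  by (rule ext) (simp add: box_def)

lemma box_mult:
  assumes f: "smooth_on \<Omega> f" and g: "smooth_on \<Omega> g" and y: "y \<in> \<Omega>"
  shows "box (\<lambda>z. f z * g z) y = box f y * g y + 2 * (\<Sum>i\<in>UNIV. mink i * (pd i f y * pd i g y)) + f y * box g y"
proof -
  have eq: "pd i (pd i (\<lambda>z. f z * g z)) y = f y * pd i (pd i g) y + 2 * (pd i f y * pd i g y) + pd i (pd i f) y * g y" for i
  proof -
    have "pd i (pd i (\<lambda>z. f z * g z)) y = pd i (\<lambda>z. f z * pd i g z + pd i f z * g z) y"
      by (intro pd_local[OF o\<Omega> y] pd_mult sd f g)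
    also have "\<dots> = pd i (\<lambda>z. f z * pd i g z) y + pd i (\<lambda>z. pd i f z * g z) y"
      by (intro pd_add differentiable_mult sd sd' f g y)
    also have "pd i (\<lambda>z. f z * pd i g z) y = f y * pd i (pd i g) y + pd i f y * pd i g y"
      by (intro pd_mult sd sd' f g y)
    also have "pd i (\<lambda>z. pd i f z * g z) y = pd i f y * pd i g y + pd i (pd i f) y * g y"
      by (intro pd_mult sd sd' f g y)
    finally show ?thesis by simp
  qed
  have "box (\<lambda>z. f z * g z) y = (\<Sum>i\<in>UNIV. f y * (mink i * pd i (pd i g) y) + 2 * (mink i * (pd i f y * pd i g y)) + (mink i * pd i (pd i f) y) * g y)"
    unfolding box_def eq by (intro sum.cong refl) (simp add: algebra_simps)
  also have "\<dots> = box f y * g y + 2 * (\<Sum>i\<in>UNIV. mink i * (pd i f y * pd i g y)) + f y * box g y"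
    unfolding box_def sum.distrib sum_distrib_left sum_distrib_right by simp
  finally show ?thesis .
qed

lemma box_sum:
  assumes A: "finite A" and f: "\<And>a. a \<in> A \<Longrightarrow> smooth_on \<Omega> (f a)" and y: "y \<in> \<Omega>"
  shows "box (\<lambda>z. \<Sum>a\<in>A. f a z) y = (\<Sum>a\<in>A. box (f a) y)"
proof -
  have eq: "pd i (pd i (\<lambda>z. \<Sum>a\<in>A. f a z)) y = (\<Sum>a\<in>A. pd i (pd i (f a)) y)" for i
  proof -
    have "pd i (pd i (\<lambda>z. \<Sum>a\<in>A. f a z)) y = pd i (\<lambda>z. \<Sum>a\<in>A. pd i (f a) z) y"
      by (intro pd_local[OF o\<Omega> y] pd_sum A sd f)
    also have "\<dots> = (\<Sum>a\<in>A. pd i (pd i (f a)) y)"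
      by (intro pd_sum A sd' f y)
    finally show ?thesis .
  qed
  show ?thesis unfolding box_def eq sum_distrib_left
    by (rule sum.swap)
qed

lemma box_pd:
  assumes f: "smooth_on \<Omega> f" and y: "y \<in> \<Omega>"
  shows "box (pd mu f) y = pd mu (box f) y"
proof -
  have "box (pd mu f) y = (\<Sum>i\<in>UNIV. mink i * pd mu (pd i (pd i f)) y)"
    unfolding box_def using pd3[OF f y] by simp
  also have "\<dots> = (\<Sum>i\<in>UNIV. pd mu (\<lambda>x. mink i * pd i (pd i f) x) y)"
    by (intro sum.cong refl pd_cmult[symmetric] sd'' f y)
  also have "\<dots> = pd mu (box f) y"
    unfolding box_eq by (intro pd_sum[symmetric]) (auto intro!: differentiable_mult sd'' f y)
  finally show ?thesis .
qed

lemma box_v0: "y \<in> \<Omega> \<Longrightarrow> box (comp V mu) y = 0"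
  using bV unfolding box_vf_def by (metis vec_lambda_beta zero_index)

lemma box_step:
  assumes y: "y \<in> \<Omega>"
  shows "box (comp (DVpow V (Suc k)) b) y =
    (\<Sum>mu\<in>UNIV. \<Sum>i\<in>UNIV. 2 * mink i * (pd i (comp V mu) y * pd i (pd mu (comp (DVpow V k) b)) y))
    + DVs (box (comp (DVpow V k) b)) y"
proof -
  let ?w = "comp (DVpow V k) b"
  have "box (comp (DVpow V (Suc k)) b) y = (\<Sum>mu\<in>UNIV. box (\<lambda>z. comp V mu z * pd mu ?w z) y)"
    unfolding w_Suc by (intro box_sum y) (auto intro!: smooth_mult[OF o\<Omega>] smooth_v smooth_pd smooth_w)
  also have "\<dots> = (\<Sum>mu\<in>UNIV. 2 * (\<Sum>i\<in>UNIV. mink i * (pd i (comp V mu) y * pd i (pd mu ?w) y)) + comp V mu y * pd mu (box ?w) y)"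
    by (intro sum.cong refl) (simp add: box_mult smooth_v smooth_pd smooth_w y box_v0 box_pd)
  also have "\<dots> = (\<Sum>mu\<in>UNIV. \<Sum>i\<in>UNIV. 2 * mink i * (pd i (comp V mu) y * pd i (pd mu ?w) y)) + DVs (box ?w) y"
    unfolding DVs_def sum.distrib sum_distrib_left by (simp add: mult.assoc)
  finally show ?thesis .
qed

definition expr :: "nat \<Rightarrow> (pt \<Rightarrow> real) \<Rightarrow> bool" where
  "expr n h \<longleftrightarrow> (\<exists>G. (\<forall>t\<in>set G. wt t \<le> n) \<and> (\<forall>y\<in>\<Omega>. h y = (\<Sum>t\<leftarrow>G. eval_mono V t y)))"

lemma expr_D: "expr n h \<Longrightarrow> \<exists>G. (\<forall>t\<in>set G. wt t \<le> n) \<and> (\<forall>y\<in>\<Omega>. h y = (\<Sum>t\<leftarrow>G. eval_mono V t y))"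
  unfolding expr_def by blast

lemma expr_zero: "(\<And>y. y \<in> \<Omega> \<Longrightarrow> h y = 0) \<Longrightarrow> expr n h"
  unfolding expr_def by (intro exI[of _ "[]"]) simp

lemma expr_single: "wt t \<le> n \<Longrightarrow> (\<And>y. y \<in> \<Omega> \<Longrightarrow> h y = eval_mono V t y) \<Longrightarrow> expr n h"
  unfolding expr_def by (intro exI[of _ "[t]"]) simp

lemma expr_add:
  assumes "expr n f" "expr n g" shows "expr n (\<lambda>y. f y + g y)"
proof -
  obtain G1 where 1: "\<forall>t\<in>set G1. wt t \<le> n" "\<forall>y\<in>\<Omega>. f y = (\<Sum>t\<leftarrow>G1. eval_mono V t y)"
    using assms(1) unfolding expr_def by blast
  obtain G2 where 2: "\<forall>t\<in>set G2. wt t \<le> n" "\<forall>y\<in>\<Omega>. g y = (\<Sum>t\<leftarrow>G2. eval_mono V t y)"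
    using assms(2) unfolding expr_def by blast
  show ?thesis unfolding expr_def using 1 2 by (intro exI[of _ "G1 @ G2"]) auto
qed

lemma expr_cmult:
  assumes "expr n f" shows "expr n (\<lambda>y. a * f y)"
proof -
  obtain G where 1: "\<forall>t\<in>set G. wt t \<le> n" "\<forall>y\<in>\<Omega>. f y = (\<Sum>t\<leftarrow>G. eval_mono V t y)"
    using assms(1) unfolding expr_def by blast
  show ?thesis unfolding expr_def using 1
    by (intro exI[of _ "map (sc a) G"]) (simp add: wt_sc o_def eval_sc sum_list_mult_left)
qed

lemma expr_diff:
  assumes "expr n f" "expr n g" shows "expr n (\<lambda>y. f y - g y)"
  using expr_add[OF assms(1) expr_cmult[OF assms(2), of "-1"]] by simp

lemma expr_le: "expr n f \<Longrightarrow> n \<le> m \<Longrightarrow> expr m f"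
  unfolding expr_def by (meson order_trans)

lemma expr_cong: "expr n g \<Longrightarrow> (\<And>y. y \<in> \<Omega> \<Longrightarrow> f y = g y) \<Longrightarrow> expr n f"
  unfolding expr_def by simp

lemma expr_sum:
  assumes "finite A" "\<And>a. a \<in> A \<Longrightarrow> expr n (f a)" shows "expr n (\<lambda>y. \<Sum>a\<in>A. f a y)"
  using assms
proof (induction A rule: finite_induct)
  case empty then show ?case by (simp add: expr_zero)
next
  case (insert a A) then show ?case using expr_add[of n "f a" "\<lambda>y. \<Sum>a\<in>A. f a y"] by simp
qed

lemma expr_sum_list:
  assumes "\<And>t. t \<in> set G \<Longrightarrow> expr n (F t)" shows "expr n (\<lambda>y. \<Sum>t\<leftarrow>G. F t y)"
  using assms
proof (induction G)
  case Nil then show ?case by (simp add: expr_zero)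
next
  case (Cons a G) then show ?case using expr_add[of n "F a" "\<lambda>y. \<Sum>t\<leftarrow>G. F t y"] by simp
qed

lemma expr_factor:
  assumes "expr n h" shows "expr (ki + n) (\<lambda>y. pd ai (comp (DVpow V ki) bi) y * h y)"
proof -
  obtain G where 1: "\<forall>t\<in>set G. wt t \<le> n" "\<forall>y\<in>\<Omega>. h y = (\<Sum>t\<leftarrow>G. eval_mono V t y)"
    using assms(1) unfolding expr_def by blast
  show ?thesis unfolding expr_def using 1
    by (intro exI[of _ "map (pf (ki, ai, bi)) G"]) (simp add: wt_pf o_def eval_pf sum_list_mult_left)
qed

lemma smooth_P: "smooth_on \<Omega> (\<lambda>x. \<Prod>(ki, ai, bi)\<leftarrow>fs. pd ai (comp (DVpow V ki) bi) x)"
proof (induction fs)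
  case Nil then show ?case by (simp add: smooth_const)
next
  case (Cons f fs)
  obtain ki ai bi where f: "f = (ki, ai, bi)" by (cases f) auto
  have "smooth_on \<Omega> (\<lambda>x. pd ai (comp (DVpow V ki) bi) x * (\<Prod>(ki, ai, bi)\<leftarrow>fs. pd ai (comp (DVpow V ki) bi) x))"
    by (rule smooth_mult[OF o\<Omega> smooth_pd[OF smooth_w] Cons.IH])
  then show ?case by (simp add: f)
qed

lemma smooth_eval: "smooth_on \<Omega> (eval_mono V t)"
proof (cases t rule: prod_cases6)
  case (fields c fs j c1 d1 e)
  have "smooth_on \<Omega> (\<lambda>x. c * (\<Prod>(ki, ai, bi)\<leftarrow>fs. pd ai (comp (DVpow V ki) bi) x) * pd c1 (pd d1 (comp (DVpow V j) e)) x)"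
    by (rule smooth_mult[OF o\<Omega> smooth_mult[OF o\<Omega> smooth_const smooth_P] smooth_pd[OF smooth_pd[OF smooth_w]]])
  moreover have "eval_mono V t = (\<lambda>x. c * (\<Prod>(ki, ai, bi)\<leftarrow>fs. pd ai (comp (DVpow V ki) bi) x) * pd c1 (pd d1 (comp (DVpow V j) e)) x)"
    by (rule ext) (simp add: fields)
  ultimately show ?thesis by simp
qed

lemma DVs_mult:
  assumes "f differentiable at y" "g differentiable at y"
  shows "DVs (\<lambda>z. f z * g z) y = f y * DVs g y + DVs f y * g y"
  unfolding DVs_def using assms
  by (simp add: pd_mult algebra_simps sum.distrib sum_distrib_left sum_distrib_right)

lemma DVs_cmult:
  assumes "f differentiable at y"
  shows "DVs (\<lambda>z. c * f z) y = c * DVs f y"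
  unfolding DVs_def using assms
  by (simp add: pd_cmult algebra_simps sum_distrib_left)

lemma DVs_local:
  assumes "y \<in> \<Omega>" "\<And>z. z \<in> \<Omega> \<Longrightarrow> f z = g z"
  shows "DVs f y = DVs g y"
  unfolding DVs_def using pd_local[OF o\<Omega> assms] by simp

lemma DVs_sum_list:
  assumes "\<And>t. t \<in> set G \<Longrightarrow> F t differentiable at y"
  shows "DVs (\<lambda>z. \<Sum>t\<leftarrow>G. F t z) y = (\<Sum>t\<leftarrow>G. DVs (F t) y)"
  unfolding DVs_def using assms
  by (simp add: pd_sum_list sum_list_mult_left[symmetric] sum_list_swap)


lemma K: "expr ((\<Sum>(ki, ai, bi)\<leftarrow>fs. ki) + j + 1) (DVs (eval_mono V (c, fs, (j, c1, d1, e))))"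
proof (induction fs arbitrary: c)
  case Nil
  let ?w = "comp (DVpow V j) e"
  let ?S = "pd c1 (pd d1 ?w)"
  have ev: "eval_mono V (c, [], (j, c1, d1, e)) = (\<lambda>x. c * ?S x)"
    by (rule ext) simp
  have e0: "expr (j + 1) (pd c1 (pd d1 (comp (DVpow V (Suc j)) e)))"
    by (rule expr_single[of "(1, [], (Suc j, c1, d1, e))"]) simp_all
  have e1: "expr (j + 1) (\<lambda>y. pd c1 (pd d1 (comp V mu)) y * pd mu ?w y)" for mu
    by (rule expr_single[of "(1, [(j, mu, e)], (0, c1, d1, mu))"]) simp_all
  have e2: "expr (j + 1) (\<lambda>y. pd d1 (comp V mu) y * pd c1 (pd mu ?w) y)" for mu
    by (rule expr_single[of "(1, [(0, d1, mu)], (j, c1, mu, e))"]) simp_all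
  have e3: "expr (j + 1) (\<lambda>y. pd c1 (comp V mu) y * pd d1 (pd mu ?w) y)" for mu
    by (rule expr_single[of "(1, [(0, c1, mu)], (j, d1, mu, e))"]) simp_all
  have all: "expr (j + 1) (\<lambda>y. c * (pd c1 (pd d1 (comp (DVpow V (Suc j)) e)) y -
     (\<Sum>mu\<in>UNIV. pd c1 (pd d1 (comp V mu)) y * pd mu ?w y
        + pd d1 (comp V mu) y * pd c1 (pd mu ?w) y
        + pd c1 (comp V mu) y * pd d1 (pd mu ?w) y)))"
    by (intro expr_cmult expr_diff e0 expr_sum finite expr_add e1 e2 e3)
  have tg: "(\<Sum>(ki, ai, bi)\<leftarrow>[]. ki) + j + 1 = j + 1" by simp
  show ?case unfolding tg
  proof (rule expr_cong[OF all])
    fix y assume y: "y \<in> \<Omega>"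
    have "DVs (eval_mono V (c, [], (j, c1, d1, e))) y = c * DVs ?S y"
      unfolding ev by (intro DVs_cmult sd'' smooth_w y)
    then show "DVs (eval_mono V (c, [], (j, c1, d1, e))) y = c * (pd c1 (pd d1 (comp (DVpow V (Suc j)) e)) y -
     (\<Sum>mu\<in>UNIV. pd c1 (pd d1 (comp V mu)) y * pd mu ?w y
        + pd d1 (comp V mu) y * pd c1 (pd mu ?w) y
        + pd c1 (comp V mu) y * pd d1 (pd mu ?w) y))"
      using FD2[OF y, of c1 d1 j e] by simp
  qed
next
  case (Cons f fs)
  obtain ki ai bi where f: "f = (ki, ai, bi)" by (cases f) auto
  let ?W = "(\<Sum>(ki, ai, bi)\<leftarrow>fs. ki) + j"
  let ?F = "pd ai (comp (DVpow V ki) bi)"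
  let ?E = "eval_mono V (c, fs, (j, c1, d1, e))"
  have ev: "eval_mono V (c, f # fs, (j, c1, d1, e)) = (\<lambda>y. ?F y * ?E y)"
    by (rule ext) (simp add: f algebra_simps)
  have eE: "expr ?W ?E" by (rule expr_single[of "(c, fs, (j, c1, d1, e))"]) simp_all
  have a1: "expr (ki + (?W + 1)) (\<lambda>y. ?F y * DVs ?E y)"
    by (rule expr_factor[OF Cons.IH])
  have a2: "expr (Suc ki + ?W) (\<lambda>y. pd ai (comp (DVpow V (Suc ki)) bi) y * ?E y)"
    by (rule expr_factor[OF eE])
  have a3: "expr (0 + (ki + ?W)) (\<lambda>y. pd ai (comp (DVpow V 0) mu) y * (pd mu (comp (DVpow V ki) bi) y * ?E y))" for mu
    by (intro expr_factor eE)
  have all: "expr (ki + ?W + 1) (\<lambda>y. ?F y * DVs ?E y + pd ai (comp (DVpow V (Suc ki)) bi) y * ?E y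
      - (\<Sum>mu\<in>UNIV. pd ai (comp (DVpow V 0) mu) y * (pd mu (comp (DVpow V ki) bi) y * ?E y)))"
    by (intro expr_diff expr_add expr_sum finite expr_le[OF a1] expr_le[OF a2] expr_le[OF a3]) simp_all
  show ?case unfolding f
  proof (rule expr_cong[OF expr_le[OF all]])
    show "ki + ?W + 1 \<le> (\<Sum>(ki, ai, bi)\<leftarrow>(ki, ai, bi) # fs. ki) + j + 1" by simp
  next
    fix y assume y: "y \<in> \<Omega>"
    have "DVs (eval_mono V (c, f # fs, (j, c1, d1, e))) y = ?F y * DVs ?E y + DVs ?F y * ?E y"
      unfolding ev by (intro DVs_mult sd' sd smooth_w smooth_eval y)
    also have "\<dots> = ?F y * DVs ?E y + pd ai (comp (DVpow V (Suc ki)) bi) y * ?E y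
      - (\<Sum>mu\<in>UNIV. pd ai (comp (DVpow V 0) mu) y * (pd mu (comp (DVpow V ki) bi) y * ?E y))"
      unfolding FD1[OF y] by (simp add: algebra_simps sum_distrib_left sum_distrib_right)
    finally show "DVs (eval_mono V (c, (ki, ai, bi) # fs, (j, c1, d1, e))) y = ?F y * DVs ?E y + pd ai (comp (DVpow V (Suc ki)) bi) y * ?E y
      - (\<Sum>mu\<in>UNIV. pd ai (comp (DVpow V 0) mu) y * (pd mu (comp (DVpow V ki) bi) y * ?E y))"
      by (simp add: f)
  qed
qed

lemma K': "expr (wt t + 1) (DVs (eval_mono V t))"
proof (cases t rule: prod_cases6)
  case (fields a b c d e f)
  have "expr ((\<Sum>(ki, ai, bi)\<leftarrow>b. ki) + c + 1) (DVs (eval_mono V (a, b, (c, d, e, f))))"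
    by (rule K)
  then show ?thesis using fields by simp
qed

lemma expr_DVs:
  assumes "expr n h" shows "expr (Suc n) (DVs h)"
proof -
  obtain G where 1: "\<forall>t\<in>set G. wt t \<le> n" "\<forall>y\<in>\<Omega>. h y = (\<Sum>t\<leftarrow>G. eval_mono V t y)"
    using assms(1) unfolding expr_def by blast
  have "expr (Suc n) (\<lambda>y. \<Sum>t\<leftarrow>G. DVs (eval_mono V t) y)"
    using 1(1) by (intro expr_sum_list expr_le[OF K']) auto
  then show ?thesis
  proof (rule expr_cong)
    fix y assume y: "y \<in> \<Omega>"
    have "DVs h y = DVs (\<lambda>z. \<Sum>t\<leftarrow>G. eval_mono V t z) y"
      using 1(2) by (intro DVs_local y) auto
    also have "\<dots> = (\<Sum>t\<leftarrow>G. DVs (eval_mono V t) y)"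
      by (intro DVs_sum_list sd smooth_eval y)
    finally show "DVs h y = (\<Sum>t\<leftarrow>G. DVs (eval_mono V t) y)" .
  qed
qed

lemma mainQ: "expr k (box (comp (DVpow V (Suc k)) b))"
proof (induction k arbitrary: b)
  case 0
  have m: "expr 0 (\<lambda>y. \<Sum>mu\<in>UNIV. \<Sum>i\<in>UNIV. 2 * mink i * (pd i (comp V mu) y * pd i (pd mu (comp (DVpow V 0) b)) y))"
    by (intro expr_sum finite expr_single[of "(2 * mink _, [(0, _, _)], (0, _, _, b))"]) simp_all
  have d: "expr 0 (DVs (box (comp (DVpow V 0) b)))"
  proof (rule expr_zero)
    fix y assume y: "y \<in> \<Omega>"
    have "DVs (box (comp (DVpow V 0) b)) y = DVs (\<lambda>_. 0) y"
      by (intro DVs_local y) (simp add: box_v0)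
    then show "DVs (box (comp (DVpow V 0) b)) y = 0" by (simp add: DVs_def)
  qed
  show ?case by (rule expr_cong[OF expr_add[OF m d]]) (erule box_step)
next
  case (Suc k)
  have m: "expr (Suc k) (\<lambda>y. \<Sum>mu\<in>UNIV. \<Sum>i\<in>UNIV. 2 * mink i * (pd i (comp V mu) y * pd i (pd mu (comp (DVpow V (Suc k)) b)) y))"
    by (intro expr_sum finite expr_single[of "(2 * mink _, [(0, _, _)], (Suc k, _, _, b))"]) simp_all
  have d: "expr (Suc k) (DVs (box (comp (DVpow V (Suc k)) b)))"
    by (rule expr_DVs[OF Suc.IH])
  show ?case by (rule expr_cong[OF expr_add[OF m d]]) (erule box_step)
qed

end

theorem lemma2p8:
  fixes \<Omega> :: "pt set" and V :: "pt \<Rightarrow> real ^ 4" and k :: nat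
  assumes "open \<Omega>"
    and "smooth_vf \<Omega> V"
    and "\<forall>x\<in>\<Omega>. box_vf V x = 0"
  shows "\<exists>G :: 4 \<Rightarrow> monomial list.
           (\<forall>a. \<forall>t\<in>set (G a). admissible k t) \<and>
           (\<forall>x\<in>\<Omega>. box_vf (DVpow V k) x = (\<chi> a. \<Sum>t\<leftarrow>G a. eval_mono V t x))"
proof (cases k)
  case 0
  show ?thesis using assms(3) 0
    by (intro exI[of _ "\<lambda>_. []"]) (simp add: vec_eq_iff)
next
  case (Suc n)
  have "\<forall>b. \<exists>G. (\<forall>t\<in>set G. wt t \<le> n) \<and> (\<forall>y\<in>\<Omega>. box (comp (DVpow V (Suc n)) b) y = (\<Sum>t\<leftarrow>G. eval_mono V t y))"
  proof
    fix b
    show "\<exists>G. (\<forall>t\<in>set G. wt t \<le> n) \<and> (\<forall>y\<in>\<Omega>. box (comp (DVpow V (Suc n)) b) y = (\<Sum>t\<leftarrow>G. eval_mono V t y))"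
      by (rule expr_D[OF assms mainQ[OF assms]])
  qed
  then obtain G where G: "\<And>b. (\<forall>t\<in>set (G b). wt t \<le> n) \<and> (\<forall>y\<in>\<Omega>. box (comp (DVpow V (Suc n)) b) y = (\<Sum>t\<leftarrow>G b. eval_mono V t y))"
    by metis
  show ?thesis
    using G Suc by (intro exI[of _ G]) (auto simp: adm_wt box_vf_def vec_eq_iff)
qed

end
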